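(* Let $D$ be a domain in $\mathbb{C}^n$, let $k\ge 0$ be an integer, and let $c>0$ and $\alpha>1$ be constants. Then the family $$\mathcal{F}=\left\{f\in\mathcal{H}(D):\ \sup_{\|v\|=1}\frac{|(D^kf(z),v)|}{1+|f(z)|^{\alpha}}>c\ \text{ for all } z\in D\right\}$$ is normal in $D$.
   Context: $\mathcal{H}(D)$ is the set of holomorphic functions $D\to\mathbb{C}$. $D^k$ denotes the operator $\left(\frac{\partial^k}{\partial z_1^k},\dots,\frac{\partial^k}{\partial z_n^k}\right)$ (for $k=0$, each component is the identity), and $(D^kf(z),v)=\sum_{j=1}^n \frac{\partial^k f}{\partial z_j^k}(z)\,v_j$ for $v=(v_1,\dots,v_n)\in\mathbb{C}^n$; the supremum is over $v\in\mathbb{C}^n$ with Euclidean norm $1$. A family is normal in $D$ if every sequence in it has a subsequence converging locally uniformly in $D$. *)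

theory Defs
  imports "HOL-Analysis.Analysis"
begin

definition holomorphic_n :: "(complex ^ 'n \<Rightarrow> complex) \<Rightarrow> (complex ^ 'n) set \<Rightarrow> bool" where
  "holomorphic_n f D \<longleftrightarrow>
     (\<forall>z\<in>D. \<exists>c :: 'n \<Rightarrow> complex. (f has_derivative (\<lambda>h. \<Sum>j\<in>UNIV. c j * h $ j)) (at z))"

definition partial_n :: "'n \<Rightarrow> (complex ^ 'n \<Rightarrow> complex) \<Rightarrow> complex ^ 'n \<Rightarrow> complex" where
  "partial_n j f z = deriv (\<lambda>w. f (\<chi> i. if i = j then w else z $ i)) (z $ j)"

definition partial_pow :: "'n \<Rightarrow> nat \<Rightarrow> (complex ^ 'n \<Rightarrow> complex) \<Rightarrow> complex ^ 'n \<Rightarrow> complex" where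
  "partial_pow j k f = (partial_n j ^^ k) f"

definition Dk_sup :: "nat \<Rightarrow> (complex ^ 'n \<Rightarrow> complex) \<Rightarrow> complex ^ 'n \<Rightarrow> real" where
  "Dk_sup k f z = (SUP v\<in>{v :: complex ^ 'n. norm v = 1}. cmod (\<Sum>j\<in>UNIV. partial_pow j k f z * v $ j))"

definition normal_family :: "(complex ^ 'n \<Rightarrow> complex) set \<Rightarrow> (complex ^ 'n) set \<Rightarrow> bool" where
  "normal_family F D \<longleftrightarrow>
     (\<forall>f :: nat \<Rightarrow> (complex ^ 'n \<Rightarrow> complex). (\<forall>m. f m \<in> F) \<longrightarrow>
        (\<exists>r g. strict_mono r \<and>
           (\<forall>K. K \<subseteq> D \<and> compact K \<longrightarrow> uniform_limit K (\<lambda>m. f (r m)) g sequentially)))"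

end

theory Submission
  imports Defs "HOL-Complex_Analysis.Complex_Analysis"
begin

no_notation fps_nth (infixl "$" 75)





definition lin :: "complex^'n \<Rightarrow> complex^'n \<Rightarrow> complex \<Rightarrow> complex^'n" where
  "lin p u t = (\<chi> i. p$i + t * u$i)"

lemma norm_scale_vec: "norm (\<chi> i. t * u$i :: complex^'n) = cmod t * norm u"
  unfolding norm_vec_def by (simp add: norm_mult L2_set_right_distrib)

lemma bl_scale: "bounded_linear (\<lambda>h. \<chi> i. h * u$i :: complex^'n)"
proof (rule bounded_linear_intro[where K="norm u"])
  show "\<And>x y. (\<chi> i. (x + y) * u $ i) = (\<chi> i. x * u $ i) + (\<chi> i. y * u $ i)"
    by (simp add: vec_eq_iff distrib_right)
  show "\<And>r x. (\<chi> i. (r *\<^sub>R x) * u $ i) = r *\<^sub>R (\<chi> i. x * u $ i)"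
    by (simp add: vec_eq_iff)
  show "\<And>x. norm (\<chi> i. x * u $ i) \<le> norm x * norm u"
    by (simp add: norm_scale_vec)
qed

lemma lin_deriv: "(lin p u has_derivative (\<lambda>h. \<chi> i. h * u$i)) (at t)"
proof -
  have "lin p u = (\<lambda>t. p + (\<chi> i. t * u$i))"
    by (auto simp: lin_def vec_eq_iff fun_eq_iff)
  moreover have "((\<lambda>t. p + (\<chi> i. t * u$i)) has_derivative (\<lambda>h. \<chi> i. h * u$i)) (at t)"
    by (rule has_derivative_eq_rhs[OF has_derivative_add[OF has_derivative_const bounded_linear_imp_has_derivative[OF bl_scale]]]) simp
  ultimately show ?thesis by simp
qed

lemma line_diff:
  assumes "holomorphic_n f D" "lin p u t \<in> D"
  shows "(\<lambda>t. f (lin p u t)) field_differentiable (at t)"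
proof -
  obtain c where c: "(f has_derivative (\<lambda>h. \<Sum>j\<in>UNIV. c j * h $ j)) (at (lin p u t))"
    using assms unfolding holomorphic_n_def by blast
  have "((\<lambda>t. f (lin p u t)) has_derivative (\<lambda>h. \<Sum>j\<in>UNIV. c j * h $ j) \<circ> (\<lambda>h. \<chi> i. h * u$i)) (at t)"
    using diff_chain_at[OF lin_deriv c] by (simp add: o_def)
  moreover have "(\<lambda>h. \<Sum>j\<in>UNIV. c j * h $ j) \<circ> (\<lambda>h. \<chi> i. h * u$i) = (*) (\<Sum>j\<in>UNIV. c j * u $ j)"
    by (auto simp: fun_eq_iff sum_distrib_left mult_ac)
  ultimately show ?thesis
    unfolding field_differentiable_def has_field_derivative_def by metis
qed

lemma line_hol:
  assumes "holomorphic_n f D" "\<And>t. t \<in> S \<Longrightarrow> lin p u t \<in> D"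
  shows "(\<lambda>t. f (lin p u t)) holomorphic_on S"
  unfolding holomorphic_on_def
  using line_diff[OF assms(1) assms(2)] field_differentiable_at_within by blast

lemma hol_cont: "holomorphic_n f D \<Longrightarrow> continuous_on D f"
  unfolding holomorphic_n_def
  by (meson continuous_at_imp_continuous_on has_derivative_continuous)



lemma slice_lin: "(\<chi> i. if i = j then w else z$i) = lin (\<chi> i. if i = j then 0 else z$i) (\<chi> i. if i = j then 1 else 0) w"
  by (simp add: lin_def vec_eq_iff)

lemma partial_pow_slice:
  "partial_pow j k f z = (deriv ^^ k) (\<lambda>w. f (\<chi> i. if i = j then w else z$i)) (z$j)"
proof (induction k arbitrary: z)
  case 0
  have "(\<chi> i. if i = j then z$j else z$i) = z" by (simp add: vec_eq_iff)
  then show ?case by (simp add: partial_pow_def)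
next
  case (Suc k)
  have "partial_pow j (Suc k) f z = deriv (\<lambda>w. partial_pow j k f (\<chi> i. if i = j then w else z$i)) (z$j)"
    by (simp add: partial_pow_def partial_n_def)
  also have "(\<lambda>w. partial_pow j k f (\<chi> i. if i = j then w else z$i))
      = (\<lambda>w. (deriv ^^ k) (\<lambda>w. f (\<chi> i. if i = j then w else z$i)) w)"
  proof
    fix w
    have e: "(\<lambda>w'. f (\<chi> i. if i = j then w' else (\<chi> i. if i = j then w else z$i)$i))
           = (\<lambda>w'. f (\<chi> i. if i = j then w' else z$i))"
      by (auto simp: fun_eq_iff intro!: arg_cong[where f=f] simp: vec_eq_iff)
    show "partial_pow j k f (\<chi> i. if i = j then w else z$i) = (deriv ^^ k) (\<lambda>w. f (\<chi> i. if i = j then w else z$i)) w"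
      using Suc.IH[of "\<chi> i. if i = j then w else z$i"] by (simp add: e)
  qed
  finally show ?case by simp
qed

lemma unit_vec_ex: "\<exists>v::complex^'n. norm v = 1"
proof -
  obtain j :: 'n where True by blast
  have "norm (\<chi> i. if i = j then (1::complex) else 0) = 1"
    unfolding norm_vec_def L2_set_def
    by (simp add: if_distrib[where f=norm] if_distrib[where f="\<lambda>x. x^2"] cong: if_cong)
  then show ?thesis by blast
qed

lemma Dk_sup_le: fixes f :: "complex^'n \<Rightarrow> complex" shows "Dk_sup k f z \<le> (\<Sum>j\<in>UNIV. cmod (partial_pow j k f z))"
  unfolding Dk_sup_def
proof (rule cSUP_least)
  show "{v :: complex ^ 'n. norm v = 1} \<noteq> {}" using unit_vec_ex by auto
  fix v :: "complex^'n" assume "v \<in> {v. norm v = 1}"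
  then have n: "norm v = 1" by simp
  have "cmod (\<Sum>j\<in>UNIV. partial_pow j k f z * v $ j) \<le> (\<Sum>j\<in>UNIV. cmod (partial_pow j k f z * v $ j))"
    by (rule norm_sum)
  also have "\<dots> \<le> (\<Sum>j\<in>UNIV. cmod (partial_pow j k f z))"
  proof (rule sum_mono)
    fix j :: 'n
    have "cmod (v$j) \<le> 1" using Finite_Cartesian_Product.norm_nth_le[of v j] n by simp
    then show "cmod (partial_pow j k f z * v $ j) \<le> cmod (partial_pow j k f z)"
      by (simp add: norm_mult mult_left_le)
  qed
  finally show "cmod (\<Sum>j\<in>UNIV. partial_pow j k f z * v $ j) \<le> (\<Sum>j\<in>UNIV. cmod (partial_pow j k f z))" .
qed


lemma powr_le_bound:
  fixes x :: real
  assumes "0 \<le> x" "0 < a" "x powr a \<le> M"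
  shows "x \<le> M powr (1/a)"
proof (cases "x = 0")
  case True then show ?thesis by simp
next
  case False
  then have "x = (x powr a) powr (1/a)" using assms by (simp add: powr_powr)
  also have "\<dots> \<le> M powr (1/a)"
    using assms by (intro powr_mono2) auto
  finally show ?thesis .
qed

lemma dist_slice: "dist (\<chi> i. if i = j then w else p$i) (p :: complex^'n) = cmod (w - p$j)"
proof -
  have "(\<chi> i. if i = j then w else p$i) - p = (\<chi> i. if i = j then w - p$j else 0)"
    by (simp add: vec_eq_iff)
  moreover have "norm (\<chi> i. if i = j then w - p$j else 0 :: complex^'n) = cmod (w - p$j)"
    unfolding norm_vec_def L2_set_def
    by (simp add: if_distrib[where f=norm] if_distrib[where f="\<lambda>x. x^2"] cong: if_cong)
  ultimately show ?thesis by (simp add: dist_norm)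
qed


lemma powr_split: "x > 0 \<Longrightarrow> (x::real) powr a = x * x powr (a - 1)"
  using powr_add[of x 1 "a - 1"] by simp

lemma cond_sum:
  fixes f :: "complex^'n \<Rightarrow> complex"
  assumes "Dk_sup k f z / (1 + cmod (f z) powr \<alpha>) > c"
  shows "c * (1 + cmod (f z) powr \<alpha>) < (\<Sum>j\<in>UNIV. cmod (partial_pow j k f z))"
proof -
  have pos: "1 + cmod (f z) powr \<alpha> > 0" by (simp add: add_pos_nonneg)
  have "c * (1 + cmod (f z) powr \<alpha>) < Dk_sup k f z"
    using assms pos by (simp add: less_divide_eq)
  also have "\<dots> \<le> (\<Sum>j\<in>UNIV. cmod (partial_pow j k f z))" by (rule Dk_sup_le)
  finally show ?thesis .
qed

lemma loc_bdd:
  fixes D K :: "(complex^'n) set"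
  assumes D: "open D" and c: "c > 0" and al: "\<alpha> > 1" and K: "compact K" "K \<subseteq> D"
  shows "\<exists>B. \<forall>f. holomorphic_n f D \<and> (\<forall>z\<in>D. Dk_sup k f z / (1 + cmod (f z) powr \<alpha>) > c)
            \<longrightarrow> (\<forall>z\<in>K. cmod (f z) \<le> B)"
proof (cases "k = 0")
  case True
  define N where "N = real CARD('n)"
  show ?thesis
  proof (intro exI allI impI ballI)
    fix f :: "complex^'n \<Rightarrow> complex" and z
    assume H: "holomorphic_n f D \<and> (\<forall>z\<in>D. Dk_sup k f z / (1 + cmod (f z) powr \<alpha>) > c)"
      and z: "z \<in> K"
    then have "c * (1 + cmod (f z) powr \<alpha>) < (\<Sum>j\<in>UNIV. cmod (partial_pow j k f z))"
      using K by (intro cond_sum) auto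
    also have "\<dots> = N * cmod (f z)" using True by (simp add: partial_pow_def N_def)
    finally have lt: "c * (1 + cmod (f z) powr \<alpha>) < N * cmod (f z)" .
    show "cmod (f z) \<le> (N / c) powr (1 / (\<alpha> - 1))"
    proof (cases "f z = 0")
      case True then show ?thesis by simp
    next
      case False
      let ?x = "cmod (f z)"
      have x: "?x > 0" using False by simp
      have e: "?x powr \<alpha> = ?x * ?x powr (\<alpha> - 1)" using powr_split[OF x] .
      have "c * (?x * ?x powr (\<alpha> - 1)) < N * ?x" using lt e c
        by (smt (verit, best) mult_left_mono powr_ge_zero)
      then have "c * ?x powr (\<alpha> - 1) < N" using x by (simp add: mult_ac)
      then have "?x powr (\<alpha> - 1) \<le> N / c" using c by (simp add: pos_le_divide_eq mult_ac)
      then show ?thesis using al by (intro powr_le_bound) auto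
    qed
  qed
next
  case False
  then have kpos: "k > 0" by simp
  show ?thesis
  proof (cases "K = {}")
    case True then show ?thesis by auto
  next
    case Kne: False
    obtain \<epsilon> where \<epsilon>: "\<epsilon> > 0" "(\<Union>x\<in>K. cball x \<epsilon>) \<subseteq> D"
      using compact_subset_open_imp_cball_epsilon_subset[OF K(1) D K(2)] by blast
    define \<delta> where "\<delta> = \<epsilon> / 2"
    have \<delta>: "\<delta> > 0" using \<epsilon> by (simp add: \<delta>_def)
    define L where "L = {z. infdist z K \<le> \<delta>}"
    have LD: "L \<subseteq> D"
    proof
      fix z assume "z \<in> L"
      obtain x where x: "x \<in> K" "infdist z K = dist z x"
        using infdist_attains_inf[OF compact_imp_closed[OF K(1)] Kne] by blast
      then have "z \<in> cball x \<epsilon>" using \<open>z \<in> L\<close> \<epsilon> by (simp add: L_def \<delta>_def dist_commute)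
      then show "z \<in> D" using \<epsilon> x by blast
    qed
    have KL: "K \<subseteq> L" using \<delta> by (auto simp: L_def)
    have Lc: "compact L"
    proof -
      have "closed L" unfolding L_def
        by (intro closed_Collect_le continuous_on_infdist continuous_on_id continuous_on_const)
      moreover have "bounded L"
      proof -
        obtain R where R: "\<And>x. x \<in> K \<Longrightarrow> norm x \<le> R"
          using compact_imp_bounded[OF K(1)] by (auto simp: bounded_iff)
        have "norm z \<le> R + \<delta>" if "z \<in> L" for z
        proof -
          obtain x where x: "x \<in> K" "infdist z K = dist z x"
            using infdist_attains_inf[OF compact_imp_closed[OF K(1)] Kne] by blast
          then have "dist z x \<le> \<delta>" using that by (simp add: L_def)
          then show ?thesis using R[OF x(1)] norm_triangle_ineq2[of z x]
            by (simp add: dist_norm)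
        qed
        then show ?thesis by (auto simp: bounded_iff)
      qed
      ultimately show ?thesis by (simp add: compact_eq_bounded_closed)
    qed
    define N where "N = real CARD('n)"
    define A where "A = 2 powr (real k / (\<alpha> - 1))"
    define C0 where "C0 = N * fact k * A * 2 ^ k"
    have C0: "C0 \<ge> 0" by (simp add: C0_def N_def A_def)
    show ?thesis
    proof (intro exI allI impI ballI)
      fix f :: "complex^'n \<Rightarrow> complex" and z0
      assume H: "holomorphic_n f D \<and> (\<forall>z\<in>D. Dk_sup k f z / (1 + cmod (f z) powr \<alpha>) > c)"
        and z0: "z0 \<in> K"
      have hol: "holomorphic_n f D" using H by blast
      have cnd: "\<And>z. z \<in> D \<Longrightarrow> c * (1 + cmod (f z) powr \<alpha>) < (\<Sum>j\<in>UNIV. cmod (partial_pow j k f z))"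
        using H by (intro cond_sum) auto
      define w where "w = (\<lambda>z. \<delta> - infdist z K)"
      define \<psi> where "\<psi> = (\<lambda>z. cmod (f z) powr (\<alpha> - 1) * w z ^ k)"
      have contf: "continuous_on L f"
        using hol_cont[OF hol] LD continuous_on_subset by blast
      have "continuous_on L \<psi>"
      proof -
        have c1: "continuous_on L (\<lambda>z. cmod (f z) powr (\<alpha> - 1))"
          using al by (intro continuous_on_powr' continuous_on_norm contf continuous_on_const) auto
        have c2: "continuous_on L (\<lambda>z. w z ^ k)"
          unfolding w_def by (intro continuous_on_power continuous_on_diff continuous_on_const continuous_on_infdist continuous_on_id)
        show ?thesis unfolding \<psi>_def by (rule continuous_on_mult[OF c1 c2])
      qed
      moreover have "L \<noteq> {}" using KL z0 by blast
      ultimately obtain p where pL: "p \<in> L" and pmax: "\<And>y. y \<in> L \<Longrightarrow> \<psi> y \<le> \<psi> p"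
        using continuous_attains_sup[OF Lc] by metis
      have wp: "w p \<ge> 0" using pL by (simp add: w_def L_def)
      have psip: "\<psi> p \<le> C0 / c"
      proof (cases "\<psi> p > 0")
        case False then show ?thesis using C0 c by (simp add: not_less order_trans[OF _ divide_nonneg_pos[OF C0 c]])
      next
        case True
        have fp: "f p \<noteq> 0" using True by (auto simp: \<psi>_def)
        have dpos: "w p > 0" using True wp kpos by (cases "w p = 0") (auto simp: \<psi>_def zero_power)
        define d where "d = w p"
        define r where "r = d / 2"
        have r: "r > 0" using dpos by (simp add: r_def d_def)
        have ballL: "y \<in> L \<and> w y \<ge> r" if "y \<in> cball p r" for y
        proof -
          have "infdist y K \<le> infdist p K + dist y p" by (rule infdist_triangle)
          also have "\<dots> \<le> infdist p K + r" using that by (simp add: dist_commute)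
          finally have "infdist y K \<le> \<delta> - d + r" by (simp add: d_def w_def)
          then show ?thesis using r by (simp add: L_def w_def r_def)
        qed
        have fbound: "cmod (f y) \<le> cmod (f p) * A" if "y \<in> cball p r" for y
        proof -
          have yL: "y \<in> L" and wy: "w y \<ge> r" using ballL[OF that] by auto
          have "cmod (f y) powr (\<alpha> - 1) * r ^ k \<le> cmod (f y) powr (\<alpha> - 1) * w y ^ k"
            using wy r by (intro mult_left_mono power_mono) auto
          also have "\<dots> \<le> \<psi> p" using pmax[OF yL] by (simp add: \<psi>_def)
          also have "\<dots> = cmod (f p) powr (\<alpha> - 1) * (2 ^ k * r ^ k)"
            by (simp add: \<psi>_def r_def d_def power_mult_distrib[symmetric])
          finally have "cmod (f y) powr (\<alpha> - 1) \<le> cmod (f p) powr (\<alpha> - 1) * 2 ^ k"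
            using r by (simp add: mult_ac)
          then have "cmod (f y) \<le> (cmod (f p) powr (\<alpha> - 1) * 2 ^ k) powr (1 / (\<alpha> - 1))"
            using al by (intro powr_le_bound) auto
          also have "\<dots> = cmod (f p) * A"
          proof -
            have "(cmod (f p) powr (\<alpha> - 1) * 2 ^ k) powr (1 / (\<alpha> - 1))
                = (cmod (f p) powr (\<alpha> - 1)) powr (1 / (\<alpha> - 1)) * (2 ^ k) powr (1 / (\<alpha> - 1))"
              by (simp add: powr_mult)
            also have "(cmod (f p) powr (\<alpha> - 1)) powr (1 / (\<alpha> - 1)) = cmod (f p)"
              using al fp by (simp add: powr_powr)
            also have "((2::real) ^ k) powr (1 / (\<alpha> - 1)) = A"
              by (simp add: A_def powr_realpow[symmetric] powr_powr)
            finally show ?thesis .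
          qed
          finally show ?thesis .
        qed
        have pj: "cmod (partial_pow j k f p) \<le> fact k * (cmod (f p) * A) / r ^ k" for j
        proof -
          define g where "g = (\<lambda>w. f (\<chi> i. if i = j then w else p$i))"
          have gl: "g = (\<lambda>t. f (lin (\<chi> i. if i = j then 0 else p$i) (\<chi> i. if i = j then 1 else 0) t))"
            unfolding g_def by (rule ext, rule arg_cong[where f=f], rule slice_lin)
          have inb: "(\<chi> i. if i = j then t else p$i) \<in> cball p r" if "t \<in> cball (p$j) r" for t
            using that dist_slice[of j t p] by (simp add: dist_commute dist_norm)
          have "g holomorphic_on cball (p$j) r"
            unfolding gl
          proof (rule line_hol[OF hol])
            fix t assume "t \<in> cball (p$j) r"
            then have "(\<chi> i. if i = j then t else p$i) \<in> cball p r" by (rule inb)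
            then have "(\<chi> i. if i = j then t else p$i) \<in> L" using ballL by blast
            then have inD: "(\<chi> i. if i = j then t else p$i) \<in> D" using LD by blast
            have eq: "(\<chi> i. if i = j then t else p$i) = lin (\<chi> i. if i = j then 0 else p$i) (\<chi> i. if i = j then 1 else 0) t"
              by (rule slice_lin)
            show "lin (\<chi> i. if i = j then 0 else p$i) (\<chi> i. if i = j then 1 else 0) t \<in> D"
              using inD unfolding eq .
          qed
          then have gh: "g holomorphic_on ball (p$j) r" and gc: "continuous_on (cball (p$j) r) g"
            by (auto intro: holomorphic_on_subset holomorphic_on_imp_continuous_on)
          have "cmod ((deriv ^^ k) g (p$j)) \<le> fact k * (cmod (f p) * A) / r ^ k"
          proof (rule Cauchy_inequality[OF gh gc r])
            fix x assume "cmod (p$j - x) = r"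
            then have "x \<in> cball (p$j) r" by (simp add: dist_norm)
            then show "cmod (g x) \<le> cmod (f p) * A" unfolding g_def using inb fbound by blast
          qed
          then show ?thesis by (simp add: partial_pow_slice g_def)
        qed
        have "c * (1 + cmod (f p) powr \<alpha>) < (\<Sum>j\<in>UNIV. cmod (partial_pow j k f p))"
          using cnd pL LD by blast
        also have "\<dots> \<le> N * (fact k * (cmod (f p) * A) / r ^ k)"
          using sum_bounded_above[of UNIV "\<lambda>j. cmod (partial_pow j k f p)", OF pj]
          by (simp add: N_def)
        finally have lt: "c * (1 + cmod (f p) powr \<alpha>) < N * (fact k * (cmod (f p) * A) / r ^ k)" .
        let ?x = "cmod (f p)"
        have x: "?x > 0" using fp by simp
        have e: "?x powr \<alpha> = ?x * ?x powr (\<alpha> - 1)" using powr_split[OF x] .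
        have "?x * (c * ?x powr (\<alpha> - 1)) < ?x * (N * fact k * A / r ^ k)"
          using lt e c by (simp add: algebra_simps)
        then have "c * ?x powr (\<alpha> - 1) < N * fact k * A / r ^ k" by (simp only: mult_less_cancel_left_pos[OF x])
        then have "c * ?x powr (\<alpha> - 1) * r ^ k < N * fact k * A" using r by (simp add: pos_less_divide_eq)
        then have "c * (?x powr (\<alpha> - 1) * d ^ k) < C0"
          by (simp add: C0_def r_def power_divide mult_ac divide_less_eq)
        then have "\<psi> p < C0 / c" using c by (simp add: \<psi>_def d_def pos_less_divide_eq mult_ac)
        then show ?thesis by simp
      qed
      have "cmod (f z0) powr (\<alpha> - 1) * \<delta> ^ k = \<psi> z0" using z0 by (simp add: \<psi>_def w_def)
      also have "\<dots> \<le> C0 / c" using pmax KL z0 psip by force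
      finally have "cmod (f z0) powr (\<alpha> - 1) \<le> C0 / c / \<delta> ^ k" by (metis pos_le_divide_eq zero_less_power \<delta>)
      then show "cmod (f z0) \<le> (C0 / c / \<delta> ^ k) powr (1 / (\<alpha> - 1))"
        using al by (intro powr_le_bound) auto
    qed
  qed
qed





lemma lip_line:
  assumes hol: "holomorphic_n f D"
    and H: "\<And>t. cmod t \<le> 2 \<Longrightarrow> lin x u t \<in> D \<and> cmod (f (lin x u t)) \<le> B"
    and t0: "cmod t0 \<le> 1"
  shows "cmod (f (lin x u t0) - f (lin x u 0)) \<le> B * cmod t0"
proof -
  define \<phi> where "\<phi> = (\<lambda>t. f (lin x u t))"
  have hc: "\<phi> holomorphic_on cball 0 2"
    unfolding \<phi>_def by (rule line_hol[OF hol]) (use H in auto)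
  then have hb: "\<phi> holomorphic_on ball 0 2" by (rule holomorphic_on_subset) auto
  have der: "(\<phi> has_field_derivative deriv \<phi> t) (at t within cball 0 1)" if "t \<in> cball 0 1" for t
    using that by (intro holomorphic_derivI[OF hb]) auto
  have db: "cmod (deriv \<phi> t) \<le> B" if "t \<in> cball 0 1" for t
  proof -
    have sub: "cball t 1 \<subseteq> cball 0 2"
    proof
      fix y assume "y \<in> cball t 1"
      then have "cmod (y - t) \<le> 1" by (simp add: dist_norm norm_minus_commute)
      moreover have "cmod t \<le> 1" using that by simp
      ultimately have "cmod y \<le> 2" using norm_triangle_ineq[of "y - t" t] by simp
      then show "y \<in> cball 0 2" by simp
    qed
    have "cmod ((deriv ^^ 1) \<phi> t) \<le> fact 1 * B / 1 ^ 1"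
    proof (rule Cauchy_inequality)
      show "\<phi> holomorphic_on ball t 1" using hc sub by (meson ball_subset_cball holomorphic_on_subset order_trans)
      show "continuous_on (cball t 1) \<phi>" using hc sub holomorphic_on_imp_continuous_on holomorphic_on_subset by blast
      fix y assume "cmod (t - y) = 1"
      then have "y \<in> cball t 1" by (simp add: dist_norm)
      then have "y \<in> cball 0 2" using sub by blast
      then show "cmod (\<phi> y) \<le> B" using H by (simp add: \<phi>_def)
    qed auto
    then show ?thesis by simp
  qed
  have "cmod (\<phi> t0 - \<phi> 0) \<le> B * cmod (t0 - 0)"
    by (rule field_differentiable_bound[OF convex_cball der db]) (use t0 in auto)
  then show ?thesis by (simp add: \<phi>_def)
qed

lemma equicont:
  fixes G :: "nat \<Rightarrow> complex^'n \<Rightarrow> complex"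
  assumes S: "open S" and hol: "\<And>n. holomorphic_n (G n) S"
    and bdd: "\<And>K. compact K \<Longrightarrow> K \<subseteq> S \<Longrightarrow> \<exists>B. \<forall>n. \<forall>z\<in>K. cmod (G n z) \<le> B"
    and x: "x \<in> S" and e: "e > 0"
  shows "\<exists>d>0. \<forall>n y. norm (x - y) < d \<longrightarrow> cmod (G n x - G n y) < e"
proof -
  obtain R where R: "R > 0" "cball x R \<subseteq> S"
    using S x open_contains_cball by blast
  obtain B0 where B0: "\<And>n z. z \<in> cball x R \<Longrightarrow> cmod (G n z) \<le> B0"
    using bdd[OF compact_cball R(2)] by blast
  define B where "B = \<bar>B0\<bar> + 1"
  have B: "B > 0" "\<And>n z. z \<in> cball x R \<Longrightarrow> cmod (G n z) \<le> B"
    using B0 by (auto simp: B_def intro: order_trans[OF B0])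
  define d where "d = min (R / 2) (e * R / (2 * B))"
  have d: "d > 0" using R B e by (simp add: d_def)
  show ?thesis
  proof (intro exI conjI allI impI)
    show "d > 0" by (fact d)
    fix n y assume ny: "norm (x - y) < d"
    show "cmod (G n x - G n y) < e"
    proof (cases "y = x")
      case True then show ?thesis using e by simp
    next
      case False
      define s where "s = norm (y - x)"
      have s: "s > 0" using False by (simp add: s_def)
      have sd: "s < d" using ny by (simp add: s_def norm_minus_commute)
      define u where "u = (\<chi> i. complex_of_real (R / (2 * s)) * (y - x)$i)"
      have "norm u = cmod (complex_of_real (R / (2 * s))) * norm (y - x)"
        unfolding u_def by (rule norm_scale_vec)
      moreover have "cmod (complex_of_real (R / (2 * s))) = R / (2 * s)"
        using s R by (simp only: norm_of_real) simp
      ultimately have nu: "norm u = R / 2"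
        using s R by (simp add: s_def[symmetric])
      define t0 where "t0 = complex_of_real (2 * s / R)"
      have lt0: "lin x u t0 = y"
        using s R by (simp add: lin_def u_def t0_def vec_eq_iff field_simps)
      have l0: "lin x u 0 = x" by (simp add: lin_def vec_eq_iff)
      have ct0: "cmod t0 = 2 * s / R" using s R unfolding t0_def by (simp only: norm_of_real) simp
      have "2 * s < R" using sd by (simp add: d_def)
      then have "cmod t0 \<le> 1" unfolding ct0 using R by (simp add: divide_le_eq_1)
      have Hl: "lin x u t \<in> S \<and> cmod (G n (lin x u t)) \<le> B" if "cmod t \<le> 2" for t
      proof -
        have "lin x u t - x = (\<chi> i. t * u$i)" by (simp add: lin_def vec_eq_iff)
        then have "dist x (lin x u t) = norm (\<chi> i. t * u$i)"
          by (metis dist_norm dist_commute)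
        also have "\<dots> = cmod t * (R / 2)" by (simp only: norm_scale_vec nu)
        also have "\<dots> \<le> R" using that R by (simp add: field_simps)
        finally have "lin x u t \<in> cball x R" by simp
        then show ?thesis using R B by blast
      qed
      have "cmod (G n (lin x u t0) - G n (lin x u 0)) \<le> B * cmod t0"
        by (rule lip_line[OF hol Hl \<open>cmod t0 \<le> 1\<close>])
      then have "cmod (G n y - G n x) \<le> B * (2 * s / R)" by (simp add: lt0 l0 ct0)
      also have "\<dots> < B * (2 * d / R)" using B R sd by (simp add: field_simps)
      also have "\<dots> \<le> e"
      proof -
        have "d \<le> e * R / (2 * B)" by (simp add: d_def)
        then have "B * (2 * d / R) \<le> B * (2 * (e * R / (2 * B)) / R)"
          using B R by (intro mult_left_mono divide_right_mono) auto
        also have "\<dots> = e" using B R by (simp add: field_simps)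
        finally show ?thesis .
      qed
      finally show ?thesis by (simp add: norm_minus_commute)
    qed
  qed
qed





lemma montel_n:
  fixes F :: "nat \<Rightarrow> complex^'n \<Rightarrow> complex"
  assumes S: "open S" and hol: "\<And>n. holomorphic_n (F n) S"
    and bdd: "\<And>K. compact K \<Longrightarrow> K \<subseteq> S \<Longrightarrow> \<exists>B. \<forall>n. \<forall>z\<in>K. cmod (F n z) \<le> B"
  shows "\<exists>r g. strict_mono r \<and> (\<forall>K. K \<subseteq> S \<and> compact K \<longrightarrow> uniform_limit K (\<lambda>m. F (r m)) g sequentially)"
proof -
  obtain K where comK: "\<And>n. compact(K n)" and KS: "\<And>n. K n \<subseteq> S"
     and "\<And>n. K n \<subseteq> interior (K (Suc n))" and "\<Union> (range K) = S"
     and subK: "\<And>X. compact X \<Longrightarrow> X \<subseteq> S \<Longrightarrow> \<exists>N. \<forall>n\<ge>N. X \<subseteq> K n"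
  proof (rule open_Union_compact_subsets[OF S])
    fix C assume a: "\<And>n. compact (C n)" "\<And>n. C n \<subseteq> S" "\<And>n. C n \<subseteq> interior (C (Suc n))"
      "\<Union> (range C) = S" "\<And>K. compact K \<Longrightarrow> K \<subseteq> S \<Longrightarrow> \<exists>N. \<forall>n\<ge>N. K \<subseteq> C n"
    show thesis by (rule that[OF a])
  qed
  have *: "\<exists>k. strict_mono (k::nat\<Rightarrow>nat) \<and> (\<exists>g. \<forall>e>0. \<exists>N. \<forall>n\<ge>N. \<forall>x\<in>K i. cmod (F (r (k n)) x - g x) < e)"
    for r :: "nat \<Rightarrow> nat" and i
  proof -
    obtain B where B: "\<And>n z. z \<in> K i \<Longrightarrow> cmod (F n z) \<le> B" using bdd[OF comK KS] by blast
    have B': "\<And>n x. x \<in> K i \<Longrightarrow> norm (F (r n) x) \<le> B" using B by blast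
    have hol': "\<And>n. holomorphic_n (F (r n)) S" using hol by blast
    have bdd': "\<exists>B. \<forall>n. \<forall>z\<in>K. cmod (F (r n) z) \<le> B" if KK: "compact K" "K \<subseteq> S" for K
    proof -
      obtain B where "\<forall>n. \<forall>z\<in>K. cmod (F n z) \<le> B" using bdd[OF KK] by blast
      then have "\<forall>n. \<forall>z\<in>K. cmod (F (r n) z) \<le> B" by simp
      then show ?thesis by (rule exI)
    qed
    have eq': "\<exists>d>0. \<forall>n y. y \<in> K i \<and> norm (x - y) < d \<longrightarrow> norm (F (r n) x - F (r n) y) < e"
      if xK: "x \<in> K i" and e0: "0 < e" for x e
    proof -
      have "x \<in> S" using xK KS by blast
      then obtain d where "d > 0" "\<forall>n y. norm (x - y) < d \<longrightarrow> cmod (F (r n) x - F (r n) y) < e"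
        using equicont[OF S hol' bdd', of x e] e0 by blast
      then show ?thesis by blast
    qed
    obtain g k where "strict_mono (k::nat\<Rightarrow>nat)"
        "\<And>e. 0 < e \<Longrightarrow> \<exists>N. \<forall>n x. n \<ge> N \<and> x \<in> K i \<longrightarrow> norm (F (r (k n)) x - g x) < e"
    proof (rule Arzela_Ascoli[of "K i" "\<lambda>n. F (r n)" B, OF comK B' eq'])
      fix g k assume "continuous_on (K i) g" "strict_mono (k::nat\<Rightarrow>nat)"
        "\<And>e. 0 < e \<Longrightarrow> \<exists>N. \<forall>n x. n \<ge> N \<and> x \<in> K i \<longrightarrow> norm (F (r (k n)) x - g x) < e"
      then show thesis using that by blast
    qed
    then show ?thesis by blast
  qed
  define \<Phi> where "\<Phi> \<equiv> \<lambda>i (r::nat\<Rightarrow>nat). \<exists>g. \<forall>e>0. \<exists>N. \<forall>n\<ge>N. \<forall>x\<in>K i. cmod (F (r n) x - g x) < e"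
  obtain k where k_mono: "strict_mono k" and k: "\<And>i. \<Phi> i (id \<circ> k)"
  proof (rule subsequence_diagonalization_lemma[where r=id and P=\<Phi>])
    show "\<exists>k. strict_mono (k::nat\<Rightarrow>nat) \<and> \<Phi> i (r \<circ> k)" for i r
      using *[where r=r and i=i] unfolding \<Phi>_def o_def by blast
    show "\<Phi> i (r \<circ> k2)"
      if ex: "\<Phi> i (r \<circ> k1)" and sub: "\<And>j. N \<le> j \<Longrightarrow> \<exists>j'\<ge>j. k2 j = k1 j'"
      for i k1 k2 N and r::"nat\<Rightarrow>nat"
    proof -
      obtain g where g: "\<And>e. e > 0 \<Longrightarrow> \<exists>N. \<forall>n\<ge>N. \<forall>x\<in>K i. cmod (F ((r \<circ> k1) n) x - g x) < e"
        using ex unfolding \<Phi>_def by blast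
      have "\<exists>M. \<forall>n\<ge>M. \<forall>x\<in>K i. cmod (F ((r \<circ> k2) n) x - g x) < e" if e0: "e > 0" for e
      proof -
        obtain N' where N': "\<And>n x. n \<ge> N' \<Longrightarrow> x \<in> K i \<Longrightarrow> cmod (F ((r \<circ> k1) n) x - g x) < e"
          using g[OF e0] by blast
        show ?thesis
        proof (intro exI allI impI ballI)
          fix n x assume n: "max N N' \<le> n" and x: "x \<in> K i"
          obtain j' where "j' \<ge> n" "k2 n = k1 j'" using sub[of n] n by auto
          then show "cmod (F ((r \<circ> k2) n) x - g x) < e" using N'[of j' x] n x by simp
        qed
      qed
      then show ?thesis unfolding \<Phi>_def by blast
    qed
  qed (rule that)
  obtain G where G: "\<And>i e. e > 0 \<Longrightarrow> \<exists>N. \<forall>n\<ge>N. \<forall>x\<in>K i. cmod (F (k n) x - G i x) < e"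
    using k unfolding \<Phi>_def o_def id_def by metis
  define g where "g = (\<lambda>z. lim (\<lambda>n. F (k n) z))"
  have GK: "(\<lambda>n. F (k n) x) \<longlonglongrightarrow> G i x" if "x \<in> K i" for i x
    unfolding lim_sequentially dist_norm using G that by fast
  have gG: "g x = G i x" if "x \<in> K i" for i x
    unfolding g_def using GK[OF that] by (rule limI)
  show ?thesis
  proof (intro exI conjI allI impI)
    show "strict_mono k" by (fact k_mono)
    fix T assume T: "T \<subseteq> S \<and> compact T"
    obtain N where N: "T \<subseteq> K N" using subK[of T] T by blast
    show "uniform_limit T (\<lambda>m. F (k m)) g sequentially"
      unfolding uniform_limit_iff eventually_sequentially dist_norm
    proof (intro allI impI)
      fix e :: real assume "e > 0"
      then obtain M where M: "\<forall>n\<ge>M. \<forall>x\<in>K N. cmod (F (k n) x - G N x) < e" using G by blast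
      show "\<exists>M. \<forall>n\<ge>M. \<forall>x\<in>T. norm (F (k n) x - g x) < e"
        using M N gG by (metis subsetD)
    qed
  qed
qed

theorem theorem10:
  fixes D :: "(complex ^ 'n) set" and k :: nat and c \<alpha> :: real
  assumes "open D" and "connected D" and "c > 0" and "\<alpha> > 1"
  shows "normal_family
           {f. holomorphic_n f D \<and>
               (\<forall>z\<in>D. Dk_sup k f z / (1 + cmod (f z) powr \<alpha>) > c)} D"
  unfolding normal_family_def
proof (intro allI impI)
  fix f :: "nat \<Rightarrow> complex^'n \<Rightarrow> complex"
  assume fm: "\<forall>m. f m \<in> {f. holomorphic_n f D \<and> (\<forall>z\<in>D. Dk_sup k f z / (1 + cmod (f z) powr \<alpha>) > c)}"
  have hol: "\<And>n. holomorphic_n (f n) D" using fm by blast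
  have bdd: "\<exists>B. \<forall>n. \<forall>z\<in>K. cmod (f n z) \<le> B" if KK: "compact K" "K \<subseteq> D" for K
  proof -
    obtain B where B: "\<forall>g. holomorphic_n g D \<and> (\<forall>z\<in>D. Dk_sup k g z / (1 + cmod (g z) powr \<alpha>) > c)
            \<longrightarrow> (\<forall>z\<in>K. cmod (g z) \<le> B)"
      using loc_bdd[OF assms(1) assms(3) assms(4) KK] by blast
    show ?thesis using B fm by blast
  qed
  show "\<exists>r g. strict_mono r \<and> (\<forall>K. K \<subseteq> D \<and> compact K \<longrightarrow> uniform_limit K (\<lambda>m. f (r m)) g sequentially)"
    by (rule montel_n[OF assms(1) hol bdd])
qed


end
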